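(* Let $Q$ be a real affine space modelled on a real vector space $V$. For all $f,f'\in A(Q)$, all $n\in\mathbb N$, $q\in Q$ and $v_1,\dots,v_n\in V$, $$\delta^n(ff')(q;v_1,\dots,v_n)=\sum_{\substack{(I,I')\\ I\cup I'=N}}\delta^{|I|}f(q;\mathbf v^{I})\,\delta^{|I'|}f'(q;\mathbf v^{I'}),$$ where the sum runs over all ordered pairs $(I,I')$ of (possibly empty, possibly overlapping) subsets of $N=\{1,\dots,n\}$ with $I\cup I'=N$.
   Context: $A(Q)$ is the space of real functions on $Q$; $ff'$ is the pointwise product. For $I=\{i_1<\dots<i_m\}\subset N$, $\mathbf v^I=(v_{i_1},\dots,v_{i_m})$. The $m$-th polarization of $f\in A(Q)$ is $\delta^0f=f$ (so $\delta^0 f(q;\mathbf v^\emptyset)=f(q)$) and for $m\ge1$ $$\delta^m f(q;w_1,\dots,w_m)=(-1)^m\sum_{J\subset\{1,\dots,m\}}(-1)^{|J|}f\Big(q+\sum_{j\in J}w_j\Big),$$ the term for $J=\emptyset$ being $f(q)$. *)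

theory Defs
  imports Complex_Main
begin

text \<open>A real affine space Q modelled on V is rendered as a type 'q together with a
  translation action act :: 'q => 'v => 'q (q + v) of the real vector space 'v
  that is an action (act q 0 = q, act (act q u) w = act q (u + w)) and is free and
  transitive. Tuples (w_1,...,w_m) are functions nat => 'v read on indices 1..m.\<close>

definition is_affine_space :: "('q \<Rightarrow> 'v::real_vector \<Rightarrow> 'q) \<Rightarrow> bool" where
  "is_affine_space act \<longleftrightarrow>
     (\<forall>q. act q 0 = q) \<and>
     (\<forall>q u w. act (act q u) w = act q (u + w)) \<and>
     (\<forall>p q. \<exists>!u. act p u = q)"

definition polarization ::
  "('q \<Rightarrow> 'v::real_vector \<Rightarrow> 'q) \<Rightarrow> ('q \<Rightarrow> real) \<Rightarrow> nat \<Rightarrow> 'q \<Rightarrow> (nat \<Rightarrow> 'v) \<Rightarrow> real" where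
  "polarization act f m q w =
     (-1) ^ m * (\<Sum>J\<in>Pow {1..m}. (-1) ^ card J * f (act q (\<Sum>j\<in>J. w j)))"

definition subtuple :: "(nat \<Rightarrow> 'v) \<Rightarrow> nat set \<Rightarrow> nat \<Rightarrow> 'v" where
  "subtuple v I = (\<lambda>k. v (sorted_list_of_set I ! (k - 1)))"

end

theory Submission
  imports Defs
begin

definition DD :: "nat set \<Rightarrow> (nat set \<Rightarrow> real) \<Rightarrow> real" where
  "DD I g = (\<Sum>J\<in>Pow I. (-1) ^ (card I - card J) * g J)"

definition PP :: "nat set \<Rightarrow> (nat set \<times> nat set) set" where
  "PP N = {(I, I'). I \<subseteq> N \<and> I' \<subseteq> N \<and> I \<union> I' = N}"

lemma DD_insert:
  assumes "finite I" "x \<notin> I"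
  shows "DD (insert x I) g = DD I (\<lambda>J. g (insert x J)) - DD I g"
proof -
  have disj: "Pow I \<inter> insert x ` Pow I = {}" using assms by auto
  have inj: "inj_on (insert x) (Pow I)" using assms
    unfolding inj_on_def by (metis PowD insert_ident subset_iff)
  have fin: "finite (Pow I)" using assms by simp
  have "DD (insert x I) g = (\<Sum>J\<in>Pow I. (-1) ^ (card (insert x I) - card J) * g J)
      + (\<Sum>J\<in>insert x ` Pow I. (-1) ^ (card (insert x I) - card J) * g J)"
    unfolding DD_def Pow_insert by (rule sum.union_disjoint) (use fin disj in auto)
  also have "(\<Sum>J\<in>insert x ` Pow I. (-1) ^ (card (insert x I) - card J) * g J)
      = (\<Sum>J\<in>Pow I. (-1) ^ (card (insert x I) - card (insert x J)) * g (insert x J))"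
    by (subst sum.reindex[OF inj]) simp
  also have "\<dots> = DD I (\<lambda>J. g (insert x J))"
    unfolding DD_def
  proof (rule sum.cong)
    fix J assume "J \<in> Pow I"
    then have "finite J" "x \<notin> J" using assms finite_subset by auto
    then show "(-1) ^ (card (insert x I) - card (insert x J)) * g (insert x J) =
       (-1) ^ (card I - card J) * g (insert x J)" using assms by simp
  qed simp
  also have "(\<Sum>J\<in>Pow I. (-1) ^ (card (insert x I) - card J) * g J) = - DD I g"
    unfolding DD_def sum_negf[symmetric]
  proof (rule sum.cong)
    fix J assume "J \<in> Pow I"
    then have "card J \<le> card I" using assms by (simp add: card_mono)
    then have "card (insert x I) - card J = Suc (card I - card J)" using assms by simp
    then show "(-1) ^ (card (insert x I) - card J) * g J = - ((-1) ^ (card I - card J) * g J)"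
      by simp
  qed simp
  finally show ?thesis by simp
qed

lemma PP_insert:
  assumes "x \<notin> N"
  shows "PP (insert x N) = (\<lambda>(I, I'). (insert x I, I')) ` PP N
     \<union> (\<lambda>(I, I'). (I, insert x I')) ` PP N
     \<union> (\<lambda>(I, I'). (insert x I, insert x I')) ` PP N"
proof (rule set_eqI, rule iffI)
  fix p assume p: "p \<in> PP (insert x N)"
  obtain I I' where pe: "p = (I, I')" by fastforce
  have h: "I \<subseteq> insert x N" "I' \<subseteq> insert x N" "I \<union> I' = insert x N" using p pe by (auto simp: PP_def)
  have h2: "(I - {x}, I' - {x}) \<in> PP N" using h assms by (auto simp: PP_def)
  consider "x \<in> I" "x \<notin> I'" | "x \<notin> I" "x \<in> I'" | "x \<in> I" "x \<in> I'" using h by blast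
  then show "p \<in> (\<lambda>(I, I'). (insert x I, I')) ` PP N
     \<union> (\<lambda>(I, I'). (I, insert x I')) ` PP N
     \<union> (\<lambda>(I, I'). (insert x I, insert x I')) ` PP N"
  proof cases
    case 1
    then have "p = (\<lambda>(I, I'). (insert x I, I')) (I - {x}, I' - {x})" using pe by auto
    then show ?thesis using h2 by blast
  next
    case 2
    then have "p = (\<lambda>(I, I'). (I, insert x I')) (I - {x}, I' - {x})" using pe by auto
    then show ?thesis using h2 by blast
  next
    case 3
    then have "p = (\<lambda>(I, I'). (insert x I, insert x I')) (I - {x}, I' - {x})" using pe by auto
    then show ?thesis using h2 by blast
  qed
next
  fix p assume "p \<in> (\<lambda>(I, I'). (insert x I, I')) ` PP N
     \<union> (\<lambda>(I, I'). (I, insert x I')) ` PP N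
     \<union> (\<lambda>(I, I'). (insert x I, insert x I')) ` PP N"
  then show "p \<in> PP (insert x N)" by (auto simp: PP_def)
qed

lemma DD_prod:
  assumes "finite N"
  shows "DD N (\<lambda>J. a J * b J) = (\<Sum>(I, I') \<in> PP N. DD I a * DD I' b)"
  using assms
proof (induction N arbitrary: a b rule: finite_induct)
  case empty
  have "PP {} = {({}, {})}" by (auto simp: PP_def)
  then show ?case by (simp add: DD_def)
next
  case (insert x N)
  let ?a = "\<lambda>J. a (insert x J)" and ?b = "\<lambda>J. b (insert x J)"
  have finP: "finite (PP N)"
    by (rule finite_subset[of _ "Pow N \<times> Pow N"]) (use insert.hyps in \<open>auto simp: PP_def\<close>)
  have subN: "\<And>I I'. (I, I') \<in> PP N \<Longrightarrow> finite I \<and> finite I' \<and> x \<notin> I \<and> x \<notin> I'"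
    using insert.hyps by (auto simp: PP_def intro: finite_subset)
  let ?f1 = "\<lambda>(I::nat set, I'::nat set). (insert x I, I')"
  let ?f2 = "\<lambda>(I::nat set, I'::nat set). (I, insert x I')"
  let ?f3 = "\<lambda>(I::nat set, I'::nat set). (insert x I, insert x I')"
  let ?F = "\<lambda>(I, I'). DD I a * DD I' b"
  have i1: "inj_on ?f1 (PP N)"
  proof (rule inj_onI)
    fix p p' assume a: "p \<in> PP N" "p' \<in> PP N" "?f1 p = ?f1 p'"
    obtain I I' J J' where e: "p = (I, I')" "p' = (J, J')" by (cases p, cases p') auto
    from a e subN[of I I'] subN[of J J'] show "p = p'" by (auto simp: insert_ident)
  qed
  have i2: "inj_on ?f2 (PP N)"
  proof (rule inj_onI)
    fix p p' assume a: "p \<in> PP N" "p' \<in> PP N" "?f2 p = ?f2 p'"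
    obtain I I' J J' where e: "p = (I, I')" "p' = (J, J')" by (cases p, cases p') auto
    from a e subN[of I I'] subN[of J J'] show "p = p'" by (auto simp: insert_ident)
  qed
  have i3: "inj_on ?f3 (PP N)"
  proof (rule inj_onI)
    fix p p' assume a: "p \<in> PP N" "p' \<in> PP N" "?f3 p = ?f3 p'"
    obtain I I' J J' where e: "p = (I, I')" "p' = (J, J')" by (cases p, cases p') auto
    from a e subN[of I I'] subN[of J J'] show "p = p'" by (auto simp: insert_ident)
  qed
  have s1: "?f1 ` PP N \<subseteq> {p. x \<in> fst p \<and> x \<notin> snd p}" using subN by auto
  have s2: "?f2 ` PP N \<subseteq> {p. x \<notin> fst p}" using subN by auto
  have s3: "?f3 ` PP N \<subseteq> {p. x \<in> fst p \<and> x \<in> snd p}" using subN by auto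
  have d12: "?f1 ` PP N \<inter> ?f2 ` PP N = {}" using s1 s2 by blast
  have d3: "(?f1 ` PP N \<union> ?f2 ` PP N) \<inter> ?f3 ` PP N = {}" using s1 s2 s3 by blast
  have "(\<Sum>p \<in> PP (insert x N). ?F p) =
     (\<Sum>p \<in> ?f1 ` PP N. ?F p) + (\<Sum>p \<in> ?f2 ` PP N. ?F p) + (\<Sum>p \<in> ?f3 ` PP N. ?F p)"
    unfolding PP_insert[OF insert.hyps(2)]
    using finP d12 d3 by (simp add: sum.union_disjoint del: sum.reindex)
  also have "\<dots> = (\<Sum>p \<in> PP N. ?F (?f1 p)) + (\<Sum>p \<in> PP N. ?F (?f2 p)) + (\<Sum>p \<in> PP N. ?F (?f3 p))"
    using i1 i2 i3 by (simp add: sum.reindex)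
  also have "\<dots> = (\<Sum>p \<in> PP N. (\<lambda>(I, I'). DD I ?a * DD I' ?b - DD I a * DD I' b) p)"
    unfolding sum.distrib[symmetric]
  proof (rule sum.cong)
    fix p assume "p \<in> PP N"
    then obtain I I' where pe: "p = (I, I')" "(I, I') \<in> PP N" by (cases p) auto
    from subN[OF pe(2)] show "?F (?f1 p) + ?F (?f2 p) + ?F (?f3 p) = (\<lambda>(I, I'). DD I ?a * DD I' ?b - DD I a * DD I' b) p"
      by (simp add: pe DD_insert algebra_simps)
  qed simp
  also have "\<dots> = (\<Sum>(I, I') \<in> PP N. DD I ?a * DD I' ?b) - (\<Sum>(I, I') \<in> PP N. DD I a * DD I' b)"
    by (simp add: sum_subtractf case_prod_beta)
  also have "\<dots> = DD N (\<lambda>J. ?a J * ?b J) - DD N (\<lambda>J. a J * b J)"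
    using insert.IH by simp
  also have "\<dots> = DD (insert x N) (\<lambda>J. a J * b J)"
    using insert.hyps by (simp add: DD_insert)
  finally show ?case by simp
qed

lemma DD_bij:
  assumes "bij_betw e A I" "finite A"
  shows "DD I g = DD A (\<lambda>J. g (e ` J))"
proof -
  have b: "bij_betw (image e) (Pow A) (Pow I)" by (rule bij_betw_Pow[OF assms(1)])
  have cI: "card I = card A" using assms(1) by (metis bij_betw_same_card)
  have "DD I g = (\<Sum>J\<in>Pow A. (-1) ^ (card I - card (e ` J)) * g (e ` J))"
    unfolding DD_def by (rule sum.reindex_bij_betw[OF b, symmetric])
  also have "\<dots> = DD A (\<lambda>J. g (e ` J))"
    unfolding DD_def
  proof (rule sum.cong)
    fix J assume "J \<in> Pow A"
    then have "inj_on e J" using assms(1) bij_betw_imp_inj_on inj_on_subset by blast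
    then show "(-1) ^ (card I - card (e ` J)) * g (e ` J) = (-1) ^ (card A - card J) * g (e ` J)"
      using cI by (simp add: card_image)
  qed simp
  finally show ?thesis .
qed

lemma pol_DD:
  "polarization act h m q w = DD {1..m} (\<lambda>J. h (act q (\<Sum>j\<in>J. w j)))"
  unfolding polarization_def DD_def sum_distrib_left
proof (rule sum.cong)
  fix J assume "J \<in> Pow {1..m}"
  then have "card J \<le> m" by (metis PowD card_atLeastAtMost card_mono diff_Suc_1 finite_atLeastAtMost)
  then have "((-1::real) ^ m * (-1) ^ card J) = (-1) ^ (m - card J)"
  proof -
    obtain k where "m = card J + k" using \<open>card J \<le> m\<close> le_Suc_ex by blast
    then show ?thesis by (simp add: power_add)
  qed
  then show "(-1) ^ m * ((-1) ^ card J * h (act q (sum w J))) =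
       (-1) ^ (card {1..m} - card J) * h (act q (sum w J))" by simp
qed simp

lemma pol_sub:
  assumes "finite I"
  shows "polarization act h (card I) q (subtuple v I) = DD I (\<lambda>J. h (act q (\<Sum>j\<in>J. v j)))"
proof -
  define l where "l = sorted_list_of_set I"
  define e where "e = (\<lambda>k. l ! (k - 1))"
  have l: "distinct l" "set l = I" "length l = card I" using assms by (auto simp: l_def)
  have b1: "bij_betw (\<lambda>k::nat. k - 1) {1..card I} {..<card I}"
    by (rule bij_betw_byWitness[where f'="\<lambda>k. k + 1"]) auto
  have b2: "bij_betw ((!) l) {..<card I} I" by (rule bij_betw_nth) (use l in auto)
  have be: "bij_betw e {1..card I} I" unfolding e_def
    using bij_betw_trans[OF b1 b2] by (simp add: comp_def)
  have "polarization act h (card I) q (subtuple v I) =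
      DD {1..card I} (\<lambda>J. h (act q (\<Sum>j\<in>J. subtuple v I j)))" by (rule pol_DD)
  also have "\<dots> = DD {1..card I} (\<lambda>J. h (act q (\<Sum>j\<in>e ` J. v j)))"
    unfolding DD_def
  proof (rule sum.cong)
    fix J assume "J \<in> Pow {1..card I}"
    then have "inj_on e J" using be bij_betw_imp_inj_on inj_on_subset by blast
    then have "(\<Sum>j\<in>e ` J. v j) = (\<Sum>j\<in>J. subtuple v I j)"
      by (simp add: sum.reindex subtuple_def e_def l_def)
    then show "(-1) ^ (card {1..card I} - card J) * h (act q (\<Sum>j\<in>J. subtuple v I j)) =
      (-1) ^ (card {1..card I} - card J) * h (act q (\<Sum>j\<in>e ` J. v j))" by simp
  qed simp
  also have "\<dots> = DD I (\<lambda>J. h (act q (\<Sum>j\<in>J. v j)))"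
    by (rule DD_bij[OF be, symmetric]) simp
  finally show ?thesis .
qed

theorem proposition3:
  fixes act :: "'q \<Rightarrow> 'v::real_vector \<Rightarrow> 'q"
    and f f' :: "'q \<Rightarrow> real" and n :: nat and q :: 'q and v :: "nat \<Rightarrow> 'v"
  assumes "is_affine_space act"
  shows "polarization act (\<lambda>x. f x * f' x) n q v =
    (\<Sum>(I, I') \<in> {(I, I'). I \<subseteq> {1..n} \<and> I' \<subseteq> {1..n} \<and> I \<union> I' = {1..n}}.
        polarization act f (card I) q (subtuple v I) *
        polarization act f' (card I') q (subtuple v I'))"
proof -
  let ?a = "\<lambda>J. f (act q (\<Sum>j\<in>J. v j))" and ?b = "\<lambda>J. f' (act q (\<Sum>j\<in>J. v j))"
  have "polarization act (\<lambda>x. f x * f' x) n q v = DD {1..n} (\<lambda>J. ?a J * ?b J)"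
    by (rule pol_DD)
  also have "\<dots> = (\<Sum>(I, I') \<in> PP {1..n}. DD I ?a * DD I' ?b)" by (rule DD_prod) simp
  also have "\<dots> = (\<Sum>(I, I') \<in> PP {1..n}. polarization act f (card I) q (subtuple v I) *
        polarization act f' (card I') q (subtuple v I'))"
  proof (rule sum.cong)
    fix p assume "p \<in> PP {1..n}"
    then obtain I I' where pe: "p = (I, I')" "finite I" "finite I'"
      by (cases p) (auto simp: PP_def intro: finite_subset)
    then show "(\<lambda>(I, I'). DD I ?a * DD I' ?b) p = (\<lambda>(I, I'). polarization act f (card I) q (subtuple v I) *
        polarization act f' (card I') q (subtuple v I')) p"
      by (simp add: pol_sub)
  qed simp
  finally show ?thesis by (simp add: PP_def)
qed

end
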